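(* For $0<x<\frac12$, $$\prod_{k=0}^{\infty}\left(1+x^{2^k}+(2x)^{2^k}\right)=\sum_{n=0}^{\infty}c(n)x^n .$$
   Context: For $n\ge 0$, $c(n)=\sum_{i=0}^{n}\left(\binom{n}{i}\bmod 2\right)2^{i}$, the integer whose binary digits form the $n$-th row of Pascal's triangle modulo $2$ (so $c(0),c(1),\dots=1,3,5,15,17,51,\dots$). *)

theory Defs
  imports "HOL-Analysis.Analysis"
begin

definition c :: "nat \<Rightarrow> nat" where
  "c n = (\<Sum>i = 0..n. ((n choose i) mod 2) * 2 ^ i)"

end

theory Submission
  imports Defs
begin

lemma choose_SS: "(Suc (Suc n) choose Suc (Suc k)) = (n choose k) + 2*(n choose Suc k) + (n choose Suc (Suc k))"
  by (simp add: binomial_Suc_Suc)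

lemma even_part: "(2*m choose (2*j+1)) mod 2 = 0 \<and> (2*m choose (2*j)) mod 2 = (m choose j) mod 2"
proof (induction m arbitrary: j)
  case 0
  then show ?case by (cases j) auto
next
  case (Suc m)
  have A: "(2*Suc m choose (2*j+1)) mod 2 = 0"
  proof (cases j)
    case 0 then show ?thesis by simp
  next
    case (Suc j')
    have "(2*Suc m choose (2*j+1)) = (2*m choose (2*j'+1)) + 2*(2*m choose Suc (2*j'+1)) + (2*m choose (2*Suc j'+1))"
      using choose_SS[of "2*m" "2*j'+1"] Suc by simp
    then show ?thesis using Suc.IH[of j'] Suc.IH[of "Suc j'"] by (simp add: mod_add_eq[symmetric])
  qed
  have B: "(2*Suc m choose (2*j)) mod 2 = (Suc m choose j) mod 2"
  proof (cases j)
    case 0 then show ?thesis by simp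
  next
    case (Suc j')
    have "(2*Suc m choose (2*j)) = (2*m choose (2*j')) + 2*(2*m choose Suc (2*j')) + (2*m choose (2*Suc j'))"
      using choose_SS[of "2*m" "2*j'"] Suc by simp
    moreover have "(Suc m choose j) = (m choose j') + (m choose Suc j')" using Suc by simp
    ultimately show ?thesis using Suc.IH[of j'] Suc.IH[of "Suc j'"]
      by (metis mod_add_eq mod_mult_self2 add.commute)
  qed
  show ?case using A B by simp
qed

lemma odd_part: "(Suc (2*m) choose (2*j)) mod 2 = (m choose j) mod 2 \<and> (Suc (2*m) choose (2*j+1)) mod 2 = (m choose j) mod 2"
proof
  show "(Suc (2*m) choose (2*j)) mod 2 = (m choose j) mod 2"
  proof (cases j)
    case 0 then show ?thesis by simp
  next
    case (Suc j')
    have "(Suc (2*m) choose (2*j)) = (2*m choose (2*j'+1)) + (2*m choose (2*j))"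
      using Suc by simp
    moreover have "(2*m choose (2*j'+1)) mod 2 = 0" using even_part[of m j'] by simp
    moreover have "(2*m choose (2*j)) mod 2 = (m choose j) mod 2" using even_part[of m j] by simp
    ultimately show ?thesis by (simp add: mod_add_eq[symmetric])
  qed
  have "(Suc (2*m) choose (2*j+1)) = (2*m choose (2*j)) + (2*m choose (2*j+1))" by simp
  then show "(Suc (2*m) choose (2*j+1)) mod 2 = (m choose j) mod 2"
    using even_part[of m j] by (simp add: mod_add_eq[symmetric])
qed

definition C :: "nat \<Rightarrow> real \<Rightarrow> real" where
  "C n y = (\<Sum>i<Suc n. real ((n choose i) mod 2) * y ^ i)"

lemma C_ext: "n < N \<Longrightarrow> (\<Sum>i<N. real ((n choose i) mod 2) * y ^ i) = C n y"
proof (induction N)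
  case 0 then show ?case by simp
next
  case (Suc N)
  show ?case
  proof (cases "n < N")
    case True then show ?thesis using Suc by (simp add: binomial_eq_0)
  next
    case False then have "N = n" using Suc.prems by simp
    then show ?thesis by (simp add: C_def)
  qed
qed

lemma sum_split2: "(\<Sum>i<2*N. f i) = (\<Sum>j<N. f (2*j) + f (2*j+1))" for f :: "nat \<Rightarrow> real"
  by (induction N) (simp_all add: add.assoc)

lemma C_even: "C (2*m) y = C m (y^2)"
proof -
  have "C (2*m) y = (\<Sum>i<2*Suc m. real ((2*m choose i) mod 2) * y ^ i)"
    by (rule C_ext[symmetric]) simp
  also have "\<dots> = (\<Sum>j<Suc m. real ((m choose j) mod 2) * (y^2) ^ j)"
    unfolding sum_split2 using even_part by (simp add: power_mult)
  finally show ?thesis by (simp add: C_def)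
qed

lemma C_odd: "C (Suc (2*m)) y = (1 + y) * C m (y^2)"
proof -
  have "C (Suc (2*m)) y = (\<Sum>i<2*Suc m. real ((Suc (2*m) choose i) mod 2) * y ^ i)"
    by (rule C_ext[symmetric]) simp
  also have "\<dots> = (\<Sum>j<Suc m. (1+y) * (real ((m choose j) mod 2) * (y^2) ^ j))"
    unfolding sum_split2
  proof (rule sum.cong[OF refl])
    fix j
    have e1: "real ((Suc (2*m) choose (2*j)) mod 2) = real ((m choose j) mod 2)"
      using odd_part[of m j] by simp
    have e2: "real ((Suc (2*m) choose (2*j+1)) mod 2) = real ((m choose j) mod 2)"
      using odd_part[of m j] by simp
    have p1: "y^(2*j) = (y^2)^j" by (simp add: power_mult)
    have p2: "y^(2*j+1) = y * (y^2)^j" by (simp add: power_mult)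
    show "real ((Suc (2*m) choose (2*j)) mod 2) * y^(2*j) + real ((Suc (2*m) choose (2*j+1)) mod 2) * y^(2*j+1)
       = (1+y) * (real ((m choose j) mod 2) * (y^2) ^ j)"
      unfolding e1 e2 p1 p2 by (simp add: algebra_simps)
  qed
  also have "\<dots> = (1 + y) * C m (y^2)" by (simp only: C_def sum_distrib_left)
  finally show ?thesis .
qed

lemma G_prod: "(\<Sum>n<2^K. C n y * x^n) = (\<Prod>k<K. 1 + x^(2^k) + (y*x)^(2^k))"
proof (induction K arbitrary: x y)
  case 0 then show ?case by (simp add: C_def)
next
  case (Suc K)
  have "(\<Sum>n<2^Suc K. C n y * x^n) = (\<Sum>m<2^K. C (2*m) y * x^(2*m) + C (Suc (2*m)) y * x^(Suc (2*m)))"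
    using sum_split2[of "\<lambda>n. C n y * x^n" "2^K"] by simp
  also have "\<dots> = (\<Sum>m<2^K. (1 + x + y*x) * (C m (y^2) * (x^2)^m))"
  proof (rule sum.cong[OF refl])
    fix m
    have p1: "x^(2*m) = (x^2)^m" by (simp add: power_mult)
    have p2: "x^(Suc (2*m)) = x * (x^2)^m" by (simp add: power_mult)
    show "C (2*m) y * x^(2*m) + C (Suc (2*m)) y * x^(Suc (2*m)) = (1 + x + y*x) * (C m (y^2) * (x^2)^m)"
      unfolding C_even C_odd p1 p2 by (simp add: algebra_simps)
  qed
  also have "\<dots> = (1 + x + y*x) * (\<Prod>k<K. 1 + (x^2)^(2^k) + (y^2*x^2)^(2^k))"
    by (simp add: sum_distrib_left[symmetric] Suc.IH)
  also have "\<dots> = (\<Prod>k<Suc K. 1 + x^(2^k) + (y*x)^(2^k))"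
  proof -
    have "(\<Prod>k<K. 1 + (x^2)^(2^k) + (y^2*x^2)^(2^k)) = (\<Prod>k<K. 1 + x^(2^Suc k) + (y*x)^(2^Suc k))"
      by (rule prod.cong[OF refl]) (simp add: power_mult[symmetric] power_mult_distrib[symmetric] mult.commute)
    then show ?thesis unfolding prod.lessThan_Suc_shift by simp
  qed
  finally show ?case .
qed

lemma c_C: "real (c n) = C n 2"
  by (simp add: c_def C_def atLeast0AtMost lessThan_Suc_atMost)

lemma pow2_sum: "(\<Sum>i<N. (2::nat)^i) < 2^N"
  by (induction N) auto

lemma c_bound: "c n < 2^Suc n"
proof -
  have "c n \<le> (\<Sum>i<Suc n. (2::nat)^i)"
    unfolding c_def atLeast0AtMost lessThan_Suc_atMost[symmetric]
    by (rule sum_mono) simp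
  then show ?thesis using pow2_sum[of "Suc n"] by linarith
qed

theorem corollary1:
  fixes x :: real
  assumes "0 < x" and "x < 1/2"
  shows "summable (\<lambda>n. real (c n) * x ^ n)
     \<and> (\<lambda>k. 1 + x ^ (2 ^ k) + (2 * x) ^ (2 ^ k)) has_prod (\<Sum>n. real (c n) * x ^ n)"
proof -
  let ?f = "\<lambda>n. real (c n) * x ^ n"
  have sg: "summable (\<lambda>n. 2 * (2*x)^n)"
    using assms by (intro summable_mult summable_geometric) simp
  have sm: "summable ?f"
  proof (rule summable_comparison_test[OF _ sg])
    show "\<exists>N. \<forall>n\<ge>N. norm (?f n) \<le> 2 * (2*x)^n"
    proof (intro exI allI impI)
      fix n
      have "c n \<le> 2 * 2^n" using c_bound[of n] by simp
      hence "real (c n) \<le> real (2 * 2^n)" by (rule of_nat_mono)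
      hence "real (c n) \<le> 2 * 2^n" by simp
      hence "real (c n) * x^n \<le> 2 * 2^n * x^n" using assms by (simp add: mult_right_mono)
      then show "norm (?f n) \<le> 2 * (2*x)^n" using assms by (simp add: power_mult_distrib)
    qed
  qed
  define S where "S = suminf ?f"
  have lim: "(\<lambda>N. \<Sum>n<N. ?f n) \<longlonglongrightarrow> S" using sm S_def summable_LIMSEQ by blast
  have smono: "strict_mono (\<lambda>K::nat. (2::nat)^Suc K)"
    by (rule strict_monoI) simp
  have lim2: "(\<lambda>K. \<Sum>n<2^Suc K. ?f n) \<longlonglongrightarrow> S"
    using LIMSEQ_subseq_LIMSEQ[OF lim smono] by (simp add: o_def)
  have eq: "(\<Sum>n<2^Suc K. ?f n) = (\<Prod>k\<le>K. 1 + x ^ (2 ^ k) + (2 * x) ^ (2 ^ k))" for K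
    using G_prod[where K="Suc K" and y=2 and x=x] by (simp add: c_C lessThan_Suc_atMost)
  have "(\<Sum>n<1. ?f n) \<le> S" unfolding S_def
    by (rule sum_le_suminf[OF sm]) (use assms in auto)
  hence Spos: "S \<noteq> 0" by (simp add: c_def)
  have "raw_has_prod (\<lambda>k. 1 + x ^ (2 ^ k) + (2 * x) ^ (2 ^ k)) 0 S"
    unfolding raw_has_prod_def using lim2 eq Spos by simp
  then show ?thesis using sm S_def has_prod_def by blast
qed

end
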